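(* For every integer $n\ge 4$, $d(C_n)<h(n)$, where $$h(n)=\begin{cases}2^{n-1}+(n+9)\cdot 2^{\frac{n-7}{2}}, & n\text{ odd},\\ 2^{n-1}+(n+12)\cdot 2^{\frac{n-8}{2}}, & n \text{ even},\ n\neq 6,\\ 42, & n=6.\end{cases}$$
   Context: All graphs are finite, simple and undirected. A subset $D\subseteq V(G)$ is a dissociation set of $G$ if the induced subgraph $G[D]$ has maximum degree at most $1$; the empty set is a dissociation set. $d(G)$ denotes the total number of dissociation sets of $G$, including the empty set. $C_n$ denotes the cycle on $n$ vertices. *)

theory Defs
  imports Main Complex_Main
begin

text \<open>A finite simple graph is given by a vertex set V and a symmetric irreflexive
adjacency relation E (only its restriction to V matters).\<close>

definition dissociation_set :: "'a set \<Rightarrow> ('a \<Rightarrow> 'a \<Rightarrow> bool) \<Rightarrow> 'a set \<Rightarrow> bool" where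
  "dissociation_set V E D \<longleftrightarrow> D \<subseteq> V \<and> (\<forall>v\<in>D. card {u\<in>D. E v u} \<le> 1)"

definition num_dissociation_sets :: "'a set \<Rightarrow> ('a \<Rightarrow> 'a \<Rightarrow> bool) \<Rightarrow> nat" where
  "num_dissociation_sets V E = card {D. dissociation_set V E D}"

definition cycle_verts :: "nat \<Rightarrow> nat set" where
  "cycle_verts n = {0..<n}"

definition cycle_adj :: "nat \<Rightarrow> nat \<Rightarrow> nat \<Rightarrow> bool" where
  "cycle_adj n i j \<longleftrightarrow> i < n \<and> j < n \<and> i \<noteq> j \<and> (j = (i + 1) mod n \<or> i = (j + 1) mod n)"

definition h_bound :: "nat \<Rightarrow> real" where
  "h_bound n =
    (if odd n then 2 ^ (n - 1) + (real n + 9) * 2 powr ((real n - 7) / 2)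
     else if n = 6 then 42
     else 2 ^ (n - 1) + (real n + 12) * 2 powr ((real n - 8) / 2))"

end

theory Submission
  imports Defs
begin

definition cyc_ok :: "nat \<Rightarrow> bool list \<Rightarrow> bool" where
  "cyc_ok n xs = list_all (\<lambda>v. xs!v \<longrightarrow> \<not>(xs!((v+1) mod n) \<and> xs!((v+n-1) mod n))) [0..<n]"

lemma cyc_ok_iff: "cyc_ok n xs \<longleftrightarrow> (\<forall>v<n. xs!v \<longrightarrow> \<not>(xs!((v+1) mod n) \<and> xs!((v+n-1) mod n)))"
  unfolding cyc_ok_def list_all_iff by auto

lemma nbrs:
  fixes n v :: nat
  assumes "n \<ge> 3" "v < n" "D \<subseteq> {0..<n}"
  shows "{u\<in>D. cycle_adj n v u} = D \<inter> {(v+1) mod n, (v+n-1) mod n}"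
proof -
  have "cycle_adj n v u \<longleftrightarrow> u = (v+1) mod n \<or> u = (v+n-1) mod n" if "u < n" for u
  proof -
    have a: "v = (u+1) mod n \<longleftrightarrow> u = (v+n-1) mod n"
    proof
      assume "v = (u+1) mod n"
      then show "u = (v+n-1) mod n" using that assms
        by (cases "u + 1 = n") (auto simp: mod_if split: if_splits)
    next
      assume "u = (v+n-1) mod n"
      then show "v = (u+1) mod n" using that assms
        by (cases "v = 0") (auto simp: mod_if split: if_splits)
    qed
    have b: "(v+1) mod n \<noteq> v" "(v+n-1) mod n \<noteq> v" using assms
      by (auto simp: mod_if)
    show ?thesis unfolding cycle_adj_def using a b that assms by auto
  qed
  then show ?thesis using assms(3) by auto
qed

lemma nbrs_distinct:
  fixes n v :: nat
  assumes "n \<ge> 3" "v < n"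
  shows "(v+1) mod n \<noteq> (v+n-1) mod n"
  using assms by (auto simp: mod_if)

lemma diss_iff:
  assumes "n \<ge> 3"
  shows "dissociation_set (cycle_verts n) (cycle_adj n) D \<longleftrightarrow>
    D \<subseteq> {0..<n} \<and> (\<forall>v<n. v \<in> D \<longrightarrow> \<not>((v+1) mod n \<in> D \<and> (v+n-1) mod n \<in> D))"
proof (cases "D \<subseteq> {0..<n}")
  case True
  have "card {u\<in>D. cycle_adj n v u} \<le> 1 \<longleftrightarrow> \<not>((v+1) mod n \<in> D \<and> (v+n-1) mod n \<in> D)"
    if "v < n" for v
  proof -
    have fin: "finite (D \<inter> {(v+1) mod n, (v+n-1) mod n})" by auto
    have ne: "(v+1) mod n \<noteq> (v+n-1) mod n" using nbrs_distinct assms that by blast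
    show ?thesis unfolding nbrs[OF assms that True]
      using ne by (cases "(v+1) mod n \<in> D"; cases "(v+n-1) mod n \<in> D") auto
  qed
  then show ?thesis using True unfolding dissociation_set_def cycle_verts_def by auto
next
  case False
  then show ?thesis unfolding dissociation_set_def cycle_verts_def by auto
qed

lemma count_eq:
  assumes "n \<ge> 3"
  shows "num_dissociation_sets (cycle_verts n) (cycle_adj n) = card {xs. length xs = n \<and> cyc_ok n xs}"
proof -
  let ?A = "{D. dissociation_set (cycle_verts n) (cycle_adj n) D}"
  let ?B = "{xs. length xs = n \<and> cyc_ok n xs}"
  let ?f = "\<lambda>D. map (\<lambda>i. i \<in> D) [0..<n]"
  let ?g = "\<lambda>xs. {i. i < n \<and> xs!i}"
  have n0: "n > 0" using assms by auto
  have "bij_betw ?f ?A ?B"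
  proof (rule bij_betw_byWitness[where f' = ?g])
    show "\<forall>a\<in>?A. ?g (?f a) = a" using diss_iff[OF assms] by auto
    show "\<forall>a'\<in>?B. ?f (?g a') = a'" by (auto intro: nth_equalityI)
    show "?f ` ?A \<subseteq> ?B"
      using diss_iff[OF assms] n0 by (auto simp: cyc_ok_iff)
    show "?g ` ?B \<subseteq> ?A"
      using n0 by (auto simp: diss_iff[OF assms] cyc_ok_iff)
  qed
  then show ?thesis unfolding num_dissociation_sets_def by (rule bij_betw_same_card)
qed

fun no3 :: "bool list \<Rightarrow> bool" where
  "no3 (a#b#c#r) = (\<not>(a \<and> b \<and> c) \<and> no3 (b#c#r))"
| "no3 _ = True"
fun cnt :: "(bool list \<Rightarrow> bool) \<Rightarrow> nat \<Rightarrow> bool list \<Rightarrow> nat" where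
  "cnt P 0 p = (if P p then 1 else 0)"
| "cnt P (Suc k) p = cnt P k (True#p) + cnt P k (False#p)"

lemma no3_iff: "no3 ys \<longleftrightarrow> (\<forall>i. i+2 < length ys \<longrightarrow> \<not>(ys!i \<and> ys!(i+1) \<and> ys!(i+2)))"
proof (induction ys rule: no3.induct)
  case (1 a b c r)
  show ?case
  proof
    assume h: "no3 (a#b#c#r)"
    show "\<forall>i. i+2 < length (a#b#c#r) \<longrightarrow> \<not>((a#b#c#r)!i \<and> (a#b#c#r)!(i+1) \<and> (a#b#c#r)!(i+2))"
    proof (intro allI impI)
      fix i assume "i+2 < length (a#b#c#r)"
      then show "\<not>((a#b#c#r)!i \<and> (a#b#c#r)!(i+1) \<and> (a#b#c#r)!(i+2))"
        using h 1 by (cases i) auto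
    qed
  next
    assume h: "\<forall>i. i+2 < length (a#b#c#r) \<longrightarrow> \<not>((a#b#c#r)!i \<and> (a#b#c#r)!(i+1) \<and> (a#b#c#r)!(i+2))"
    have "\<not>(a \<and> b \<and> c)" using h[rule_format, of 0] by auto
    moreover have "no3 (b#c#r)" unfolding 1
    proof (intro allI impI)
      fix i assume "i+2 < length (b#c#r)"
      then show "\<not>((b#c#r)!i \<and> (b#c#r)!(i+1) \<and> (b#c#r)!(i+2))"
        using h[rule_format, of "Suc i"] by auto
    qed
    ultimately show "no3 (a#b#c#r)" by simp
  qed
qed auto

lemma cnt_card: "cnt P k p = card {xs. length xs = k \<and> P (xs @ p)}"
proof (induction k arbitrary: p)
  case 0
  have "{xs. length xs = 0 \<and> P (xs @ p)} = (if P p then {[]} else {})" by auto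
  then show ?case by simp
next
  case (Suc k)
  let ?S = "\<lambda>b. {xs. length xs = k \<and> P (xs @ b # p)}"
  have eq: "{xs. length xs = Suc k \<and> P (xs @ p)} = (\<lambda>xs. xs @ [True]) ` ?S True \<union> (\<lambda>xs. xs @ [False]) ` ?S False"
  proof
    show "{xs. length xs = Suc k \<and> P (xs @ p)} \<subseteq> (\<lambda>xs. xs @ [True]) ` ?S True \<union> (\<lambda>xs. xs @ [False]) ` ?S False"
    proof
      fix xs assume "xs \<in> {xs. length xs = Suc k \<and> P (xs @ p)}"
      then have L: "length xs = Suc k" and PP: "P (xs @ p)" by auto
      then have "xs \<noteq> []" by auto
      then obtain ys b where X: "xs = ys @ [b]" using rev_exhaust by blast
      have "length ys = k" using L X by simp
      moreover have "P (ys @ b # p)" using PP X by simp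
      ultimately have "length ys = k \<and> P (ys @ b # p) \<and> xs = ys @ [b]" using X by blast
      then have "ys \<in> ?S b" "xs = ys @ [b]" by auto
      then show "xs \<in> (\<lambda>xs. xs @ [True]) ` ?S True \<union> (\<lambda>xs. xs @ [False]) ` ?S False"
      proof (cases b)
        case True
        then show ?thesis using \<open>ys \<in> ?S b\<close> \<open>xs = ys @ [b]\<close> by (intro UnI1 image_eqI[of _ _ ys]) auto
      next
        case False
        then show ?thesis using \<open>ys \<in> ?S b\<close> \<open>xs = ys @ [b]\<close> by (intro UnI2 image_eqI[of _ _ ys]) auto
      qed
    qed
    show "(\<lambda>xs. xs @ [True]) ` ?S True \<union> (\<lambda>xs. xs @ [False]) ` ?S False \<subseteq> {xs. length xs = Suc k \<and> P (xs @ p)}"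
      by auto
  qed
  have F: "finite {xs::bool list. set xs \<subseteq> UNIV \<and> length xs = k}"
    by (rule finite_lists_length_eq) simp
  have fin: "finite (?S b)" for b
    by (rule finite_subset[OF _ F]) blast
  have "card {xs. length xs = Suc k \<and> P (xs @ p)} =
        card ((\<lambda>xs. xs @ [True]) ` ?S True) + card ((\<lambda>xs. xs @ [False]) ` ?S False)"
    unfolding eq proof (rule card_Un_disjoint)
    show "finite ((\<lambda>xs. xs @ [True]) ` ?S True)" using fin by blast
    show "finite ((\<lambda>xs. xs @ [False]) ` ?S False)" using fin by blast
    show "(\<lambda>xs. xs @ [True]) ` ?S True \<inter> (\<lambda>xs. xs @ [False]) ` ?S False = {}" by auto
  qed
  also have "\<dots> = card (?S True) + card (?S False)"
    by (simp add: card_image inj_on_def)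
  finally show ?case using Suc by simp
qed

lemma ys_nth:
  assumes "length xs = n" "n \<ge> 2" "j < n + 2"
  shows "(xs @ take 2 xs)!j = xs!(j mod n)"
proof (cases "j < n")
  case True then show ?thesis using assms by (simp add: nth_append)
next
  case False
  then have "j mod n = (j - n) mod n" using le_mod_geq[of n j] by simp
  also have "\<dots> = j - n" using assms False by (intro mod_less) linarith
  finally have "j mod n = j - n" .
  then show ?thesis using assms False by (simp add: nth_append)
qed

lemma win_iff:
  fixes n :: nat
  assumes "n \<ge> 3"
  shows "(\<forall>i<n. \<not>(f i \<and> f ((i+1) mod n) \<and> f ((i+2) mod n))) \<longleftrightarrow>
         (\<forall>v<n. f v \<longrightarrow> \<not>(f ((v+1) mod n) \<and> f ((v+n-1) mod n)))"
proof -
  have h1: "((v+n-1) mod n + 1) mod n = v" if "v < n" for v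
  proof -
    have "((v+n-1) mod n + 1) mod n = (v+n-1+1) mod n" by (rule mod_add_left_eq)
    also have "v+n-1+1 = v + n" using assms by simp
    finally show ?thesis using that by simp
  qed
  have h2: "((v+n-1) mod n + 2) mod n = (v+1) mod n" if "v < n" for v
  proof -
    have "((v+n-1) mod n + 2) mod n = (v+n-1+2) mod n" by (rule mod_add_left_eq)
    also have "v+n-1+2 = (v + 1) + n" using assms by simp
    also have "((v + 1) + n) mod n = (v+1) mod n" by (rule mod_add_self2)
    finally show ?thesis .
  qed
  have h3: "((i+1) mod n + 1) mod n = (i+2) mod n" for i
  proof -
    have "((i+1) mod n + 1) mod n = (i+1+1) mod n" by (rule mod_add_left_eq)
    then show ?thesis by simp
  qed
  have h4: "((i+1) mod n + n - 1) mod n = i" if "i < n" for i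
  proof -
    have "(i+1) mod n + n - 1 = (i+1) mod n + (n - 1)" using assms by simp
    then have "((i+1) mod n + n - 1) mod n = ((i+1) mod n + (n-1)) mod n" by simp
    also have "\<dots> = (i+1+(n-1)) mod n" by (rule mod_add_left_eq)
    also have "i+1+(n-1) = i + n" using assms by simp
    finally show ?thesis using that by simp
  qed
  have n0: "n > 0" using assms by simp
  show ?thesis
  proof
    assume H: "\<forall>i<n. \<not>(f i \<and> f ((i+1) mod n) \<and> f ((i+2) mod n))"
    show "\<forall>v<n. f v \<longrightarrow> \<not>(f ((v+1) mod n) \<and> f ((v+n-1) mod n))"
    proof (intro allI impI)
      fix v assume "v < n" "f v"
      have "(v+n-1) mod n < n" using n0 by simp
      then show "\<not>(f ((v+1) mod n) \<and> f ((v+n-1) mod n))"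
        using H[rule_format, of "(v+n-1) mod n"] h1[OF \<open>v<n\<close>] h2[OF \<open>v<n\<close>] \<open>f v\<close> by auto
    qed
  next
    assume H: "\<forall>v<n. f v \<longrightarrow> \<not>(f ((v+1) mod n) \<and> f ((v+n-1) mod n))"
    show "\<forall>i<n. \<not>(f i \<and> f ((i+1) mod n) \<and> f ((i+2) mod n))"
    proof (intro allI impI)
      fix i assume "i < n"
      have "(i+1) mod n < n" using n0 by simp
      then show "\<not>(f i \<and> f ((i+1) mod n) \<and> f ((i+2) mod n))"
        using H[rule_format, of "(i+1) mod n"] h3[of i] h4[OF \<open>i<n\<close>] by auto
    qed
  qed
qed

lemma cyc_no3:
  assumes "length xs = n" "n \<ge> 3"
  shows "cyc_ok n xs \<longleftrightarrow> no3 (xs @ take 2 xs)"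
proof -
  have L: "length (xs @ take 2 xs) = n + 2" using assms by simp
  have "no3 (xs @ take 2 xs) \<longleftrightarrow> (\<forall>i<n. \<not>(xs!i \<and> xs!((i+1) mod n) \<and> xs!((i+2) mod n)))"
    unfolding no3_iff L
  proof (intro iffI allI impI)
    fix i assume H: "\<forall>i. i + 2 < n + 2 \<longrightarrow> \<not> ((xs @ take 2 xs) ! i \<and> (xs @ take 2 xs) ! (i + 1) \<and> (xs @ take 2 xs) ! (i + 2))"
      and i: "i < n"
    have "(xs @ take 2 xs) ! i = xs ! (i mod n)" "(xs @ take 2 xs) ! (i+1) = xs ! ((i+1) mod n)"
      "(xs @ take 2 xs) ! (i+2) = xs ! ((i+2) mod n)"
      using ys_nth[OF assms(1)] assms(2) i by auto
    moreover have "i mod n = i" using i by simp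
    ultimately show "\<not> (xs ! i \<and> xs ! ((i + 1) mod n) \<and> xs ! ((i + 2) mod n))"
      using H[rule_format, of i] i by simp
  next
    fix i assume H: "\<forall>i<n. \<not> (xs ! i \<and> xs ! ((i + 1) mod n) \<and> xs ! ((i + 2) mod n))"
      and i: "i + 2 < n + 2"
    have "(xs @ take 2 xs) ! i = xs ! (i mod n)" "(xs @ take 2 xs) ! (i+1) = xs ! ((i+1) mod n)"
      "(xs @ take 2 xs) ! (i+2) = xs ! ((i+2) mod n)"
      using ys_nth[OF assms(1)] assms(2) i by auto
    moreover have "i mod n = i" using i by simp
    ultimately show "\<not> ((xs @ take 2 xs) ! i \<and> (xs @ take 2 xs) ! (i + 1) \<and> (xs @ take 2 xs) ! (i + 2))"
      using H[rule_format, of i] i by simp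
  qed
  then show ?thesis unfolding cyc_ok_iff using win_iff[OF assms(2), of "\<lambda>i. xs!i"] by simp
qed

lemma small_count:
  assumes "n \<ge> 3"
  shows "num_dissociation_sets (cycle_verts n) (cycle_adj n) = cnt (\<lambda>xs. no3 (xs @ take 2 xs)) n []"
proof -
  have "{xs. length xs = n \<and> cyc_ok n xs} = {xs. length xs = n \<and> no3 ((xs @ []) @ take 2 (xs @ []))}"
    using cyc_no3 assms by auto
  then show ?thesis unfolding count_eq[OF assms] cnt_card by simp
qed

lemma v4: "cnt (\<lambda>xs. no3 (xs @ take 2 xs)) 4 [] = 11" by code_simp
lemma v5: "cnt (\<lambda>xs. no3 (xs @ take 2 xs)) 5 [] = 21" by code_simp
lemma v6: "cnt (\<lambda>xs. no3 (xs @ take 2 xs)) 6 [] = 39" by code_simp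
lemma v7: "cnt (\<lambda>xs. no3 (xs @ take 2 xs)) 7 [] = 71" by code_simp
lemma v8: "cnt (\<lambda>xs. no3 (xs @ take 2 xs)) 8 [] = 131" by code_simp
lemma v9: "cnt (\<lambda>xs. no3 (xs @ take 2 xs)) 9 [] = 241" by code_simp
lemma v10: "cnt (\<lambda>xs. no3 (xs @ take 2 xs)) 10 [] = 443" by code_simp
lemma v11: "cnt (\<lambda>xs. no3 (xs @ take 2 xs)) 11 [] = 815" by code_simp

lemma hb4: "h_bound 4 = 12" by (simp add: h_bound_def powr_minus)
lemma hb5: "h_bound 5 = 23" by (simp add: h_bound_def powr_minus)
lemma hb7: "h_bound 7 = 80" by (simp add: h_bound_def)
lemma hb8: "h_bound 8 = 148" by (simp add: h_bound_def)

lemma hb_ge: "n \<noteq> 6 \<Longrightarrow> h_bound n \<ge> 2 ^ (n - 1)"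
  by (simp add: h_bound_def)


definition lin6 :: "bool list \<Rightarrow> bool" where
  "lin6 a = list_all (\<lambda>v. a!v \<longrightarrow> \<not>(a!(v+1) \<and> a!(v-1))) [1..<5]"

lemma c_lin6: "cnt lin6 6 [] = 44" by code_simp

lemma big:
  assumes "n \<ge> 12"
  shows "card {xs. length xs = n \<and> cyc_ok n xs} \<le> 44 * 44 * 2 ^ (n - 12)"
proof -
  let ?A = "{a. length a = 6 \<and> lin6 a}"
  let ?C = "{c::bool list. set c \<subseteq> UNIV \<and> length c = n - 12}"
  have cA: "card ?A = 44" using c_lin6 cnt_card[of lin6 6 "[]"] by simp
  have cC: "card ?C = 2 ^ (n - 12)" using card_lists_length_eq[of "UNIV::bool set" "n - 12"] by simp
  have sub: "{xs. length xs = n \<and> cyc_ok n xs} \<subseteq> (\<lambda>(a,b,c). a @ b @ c) ` (?A \<times> ?A \<times> ?C)"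
  proof
    fix xs assume "xs \<in> {xs. length xs = n \<and> cyc_ok n xs}"
    then have len: "length xs = n" and ok: "\<And>v. v < n \<Longrightarrow> xs!v \<Longrightarrow> \<not>(xs!((v+1) mod n) \<and> xs!((v+n-1) mod n))"
      by (auto simp: cyc_ok_iff)
    have ok2: "\<not>(xs!(v+1) \<and> xs!(v-1))" if "1 \<le> v" "v + 1 < n" "xs!v" for v
    proof -
      have "(v+1) mod n = v+1" using that by simp
      moreover have "(v+n-1) mod n = v-1"
      proof -
        have "v+n-1 = (v-1) + n" using that by simp
        then have "(v+n-1) mod n = ((v-1) + n) mod n" by simp
        also have "\<dots> = (v-1) mod n" by (rule mod_add_self2)
        also have "\<dots> = v - 1" using that by simp
        finally show ?thesis .
      qed
      ultimately show ?thesis using ok[of v] that by simp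
    qed
    have "lin6 (take 6 xs)" unfolding lin6_def list_all_iff
    proof
      fix v assume "v \<in> set [1..<5]"
      then have v: "1 \<le> v" "v < 5" by auto
      show "take 6 xs ! v \<longrightarrow> \<not> (take 6 xs ! (v + 1) \<and> take 6 xs ! (v - 1))"
        using ok2[of v] v len assms by simp
    qed
    moreover have "lin6 (take 6 (drop 6 xs))" unfolding lin6_def list_all_iff
    proof
      fix v assume "v \<in> set [1..<5]"
      then have v: "1 \<le> v" "v < 5" by auto
      have e: "6 + v - 1 = 6 + (v - 1)" "6 + v + 1 = 6 + (v + 1)" using v by simp_all
      show "take 6 (drop 6 xs) ! v \<longrightarrow> \<not> (take 6 (drop 6 xs) ! (v + 1) \<and> take 6 (drop 6 xs) ! (v - 1))"
        using ok2[of "6 + v"] v len assms e by simp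
    qed
    moreover have "length (take 6 xs) = 6" "length (take 6 (drop 6 xs)) = 6" "length (drop 12 xs) = n - 12"
      using len assms by simp_all
    moreover have "xs = take 6 xs @ take 6 (drop 6 xs) @ drop 12 xs"
    proof -
      have "take 6 (drop 6 xs) @ drop 12 xs = drop 6 xs"
        using append_take_drop_id[of 6 "drop 6 xs"] by simp
      then show ?thesis by simp
    qed
    ultimately show "xs \<in> (\<lambda>(a,b,c). a @ b @ c) ` (?A \<times> ?A \<times> ?C)"
      by (intro image_eqI[where x = "(take 6 xs, take 6 (drop 6 xs), drop 12 xs)"]) auto
  qed
  have F: "finite {xs::bool list. set xs \<subseteq> UNIV \<and> length xs = 6}"
    by (rule finite_lists_length_eq) simp
  have finA: "finite ?A" by (rule finite_subset[OF _ F]) blast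
  have finC: "finite ?C" by (rule finite_lists_length_eq) simp
  have "card {xs. length xs = n \<and> cyc_ok n xs} \<le> card ((\<lambda>(a,b,c). a @ b @ c) ` (?A \<times> ?A \<times> ?C))"
    using sub finA finC by (intro card_mono) auto
  also have "\<dots> \<le> card (?A \<times> ?A \<times> ?C)" by (rule card_image_le) (use finA finC in auto)
  also have "\<dots> = 44 * 44 * 2 ^ (n - 12)" using cA cC by (simp add: card_cartesian_product)
  finally show ?thesis .
qed

lemma pow_e: assumes "n \<ge> (12::nat)" shows "(2::real) ^ (n - 1) = 2048 * 2 ^ (n - 12)"
proof -
  have h: "n - 1 = 11 + (n - 12)" using assms by linarith
  have "(2::real) ^ (n - 1) = 2 ^ (11 + (n - 12))" by (simp only: h)
  also have "\<dots> = 2 ^ 11 * 2 ^ (n - 12)" by (rule power_add)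
  also have "(2::real) ^ 11 = 2048" by simp
  finally show ?thesis .
qed

lemma large_case: assumes "n \<ge> 12" shows "real (num_dissociation_sets (cycle_verts n) (cycle_adj n)) < h_bound n"
proof -
  have ce: "num_dissociation_sets (cycle_verts n) (cycle_adj n) = card {xs. length xs = n \<and> cyc_ok n xs}"
    by (rule count_eq) (use assms in linarith)
  have c: "num_dissociation_sets (cycle_verts n) (cycle_adj n) \<le> 1936 * 2 ^ (n - 12)"
    unfolding ce using big[OF assms] by linarith
  have p: "(0::real) < 2 ^ (n - 12)" by simp
  have "real (num_dissociation_sets (cycle_verts n) (cycle_adj n)) \<le> real (1936 * 2 ^ (n - 12))"
    using c of_nat_le_iff by blast
  also have "\<dots> = 1936 * 2 ^ (n - 12)" by simp
  also have "\<dots> < 2 ^ (n - 1)" unfolding pow_e[OF assms] using p by linarith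
  also have "\<dots> \<le> h_bound n" by (rule hb_ge) (use assms in linarith)
  finally show ?thesis .
qed

lemma sc4: "num_dissociation_sets (cycle_verts 4) (cycle_adj 4) = 11" using small_count[of 4] v4 by simp
lemma sc5: "num_dissociation_sets (cycle_verts 5) (cycle_adj 5) = 21" using small_count[of 5] v5 by simp
lemma sc6: "num_dissociation_sets (cycle_verts 6) (cycle_adj 6) = 39" using small_count[of 6] v6 by simp
lemma sc7: "num_dissociation_sets (cycle_verts 7) (cycle_adj 7) = 71" using small_count[of 7] v7 by simp
lemma sc8: "num_dissociation_sets (cycle_verts 8) (cycle_adj 8) = 131" using small_count[of 8] v8 by simp
lemma sc9: "num_dissociation_sets (cycle_verts 9) (cycle_adj 9) = 241" using small_count[of 9] v9 by simp
lemma sc10: "num_dissociation_sets (cycle_verts 10) (cycle_adj 10) = 443" using small_count[of 10] v10 by simp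
lemma sc11: "num_dissociation_sets (cycle_verts 11) (cycle_adj 11) = 815" using small_count[of 11] v11 by simp

lemma hb6: "h_bound 6 = 42" by (simp add: h_bound_def)
lemma hb9: "h_bound 9 \<ge> 256" using hb_ge[of 9] by simp
lemma hb10: "h_bound 10 \<ge> 512" using hb_ge[of 10] by simp
lemma hb11: "h_bound 11 \<ge> 1024" using hb_ge[of 11] by simp

theorem lemma4p1:
  fixes n :: nat
  assumes "n \<ge> 4"
  shows "real (num_dissociation_sets (cycle_verts n) (cycle_adj n)) < h_bound n"
proof (cases "n \<ge> 12")
  case True
  then show ?thesis by (rule large_case)
next
  case False
  then have "n = 4 \<or> n = 5 \<or> n = 6 \<or> n = 7 \<or> n = 8 \<or> n = 9 \<or> n = 10 \<or> n = 11" using assms by linarith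
  then show ?thesis
  proof (elim disjE)
    assume "n = 4" then show ?thesis using sc4 hb4 by simp
  next
    assume "n = 5" then show ?thesis using sc5 hb5 by simp
  next
    assume "n = 6" then show ?thesis using sc6 hb6 by simp
  next
    assume "n = 7" then show ?thesis using sc7 hb7 by simp
  next
    assume "n = 8" then show ?thesis using sc8 hb8 by simp
  next
    assume "n = 9" then show ?thesis using sc9 hb9 by simp
  next
    assume "n = 10" then show ?thesis using sc10 hb10 by simp
  next
    assume "n = 11" then show ?thesis using sc11 hb11 by simp
  qed
qed

end
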